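(* Let $m\ge 1$. The chip-firing process on the self-loop graph, beginning with $4m-1$ chips at site $0$, terminates with exactly $1$ chip at each of the positions $-m$, $0$ and $m$; exactly $2$ chips at each of the positions $-m+1,\dots,-1$ and $1,\dots,m-1$; and $0$ chips elsewhere.
   Context: The self-loop graph is the path graph on $\mathbb{Z}$ (each $i$ adjacent to $i\pm1$) with one self-loop at every vertex. A site can fire if it holds at least $3$ chips; firing sends one chip to each of the two neighboring sites and keeps one (the chip along the self-loop) at the site. The process terminates when every site has at most $2$ chips. *)

theory Defs
  imports Main
begin

type_synonym config = "int \<Rightarrow> nat"

text \<open>Firing site v (allowed when it holds at least 3 chips): one chip to each neighbour,
  one chip stays (self-loop), so site v loses 2 chips net.\<close>
definition fire :: "config \<Rightarrow> int \<Rightarrow> config" where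
  "fire c v = (\<lambda>w. if w = v then c v - 2
                    else if w = v - 1 \<or> w = v + 1 then c w + 1
                    else c w)"

definition can_fire :: "config \<Rightarrow> int \<Rightarrow> bool" where
  "can_fire c v \<longleftrightarrow> c v \<ge> 3"

definition chip_step :: "config \<Rightarrow> config \<Rightarrow> bool" where
  "chip_step c d \<longleftrightarrow> (\<exists>v. can_fire c v \<and> d = fire c v)"

definition stable :: "config \<Rightarrow> bool" where
  "stable c \<longleftrightarrow> (\<forall>v. c v \<le> 2)"

definition terminates_with :: "config \<Rightarrow> config \<Rightarrow> bool" where
  "terminates_with c d \<longleftrightarrow>
     \<not> (\<exists>f. f 0 = c \<and> (\<forall>n. chip_step (f n) (f (Suc n)))) \<and>
     chip_step\<^sup>*\<^sup>* c d \<and> stable d \<and>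
     (\<forall>e. chip_step\<^sup>*\<^sup>* c e \<and> stable e \<longrightarrow> e = d)"

end

theory Submission
  imports Defs
begin

lemma fire_int: "2 \<le> c v \<Longrightarrow> int (fire c v w) = int (c w) + (if w = v-1 then 1 else 0)
   + (if w = v+1 then 1 else 0) - (if w = v then 2 else 0)"
  by (auto simp: fire_def of_nat_diff)

lemma sum_fire:
  assumes "finite B" "v-1 \<in> B" "v \<in> B" "v+1 \<in> B" "2 \<le> c v"
  shows "(\<Sum>w\<in>B. g w * int (fire c v w)) = (\<Sum>w\<in>B. g w * int (c w)) + g (v-1) + g (v+1) - 2 * g v"
proof -
  have "(\<Sum>w\<in>B. g w * int (fire c v w)) = (\<Sum>w\<in>B. g w * int (c w) + (if w = v-1 then g w else 0)
     + (if w = v+1 then g w else 0) - (if w = v then 2 * g w else 0))"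
    proof (rule sum.cong)
    fix w
    have h: "int (fire c v w) = int (c w) + (if w = v-1 then 1 else 0)
   + (if w = v+1 then 1 else 0) - (if w = v then 2 else 0)" using fire_int[of c v w] assms(5) by blast
    show "g w * int (fire c v w) = g w * int (c w) + (if w = v-1 then g w else 0)
     + (if w = v+1 then g w else 0) - (if w = v then 2 * g w else 0)"
      unfolding h by (cases "w = v-1"; cases "w = v+1"; cases "w = v"; simp add: algebra_simps)
  qed simp
  also have "\<dots> = (\<Sum>w\<in>B. g w * int (c w)) + g (v-1) + g (v+1) - 2 * g v"
    using assms by (simp add: sum.distrib sum_subtractf sum.delta)
  finally show ?thesis .
qed

definition Inv :: "int \<Rightarrow> config \<Rightarrow> bool" where
  "Inv N c \<longleftrightarrow> (\<exists>a b. a \<le> 0 \<and> 0 \<le> b \<and> (\<forall>w. c w \<noteq> 0 \<longrightarrow> a \<le> w \<and> w \<le> b)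
     \<and> (\<forall>w. a < w \<and> w < b \<longrightarrow> 1 \<le> c w) \<and> (\<Sum>w\<in>{a..b}. int (c w)) = N)"

lemma Inv_bound:
  assumes "Inv N c" "c w \<noteq> 0" shows "-(N+1) \<le> w \<and> w \<le> N+1"
proof -
  obtain a b where ab: "a \<le> 0" "0 \<le> b" "\<forall>w. c w \<noteq> 0 \<longrightarrow> a \<le> w \<and> w \<le> b"
    "\<forall>w. a < w \<and> w < b \<longrightarrow> 1 \<le> c w" "(\<Sum>w\<in>{a..b}. int (c w)) = N"
    using assms(1) unfolding Inv_def by blast
  have 1: "(\<Sum>w\<in>{a<..<b}. int (c w)) \<le> (\<Sum>w\<in>{a..b}. int (c w))"
    by (rule sum_mono2) auto
  have 2: "(\<Sum>w\<in>{a<..<b}. 1::int) \<le> (\<Sum>w\<in>{a<..<b}. int (c w))"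
    by (rule sum_mono) (use ab in force)
  have 3: "(\<Sum>w\<in>{a<..<b}. 1::int) = int (nat (b - (a+1)))" by simp
  have "b - a - 1 \<le> N" using 1 2 3 ab(5) by linarith
  moreover have "a \<le> w \<and> w \<le> b" using ab(3) assms(2) by blast
  ultimately show ?thesis using ab by linarith
qed

lemma Inv_fire:
  assumes "Inv N c" "3 \<le> c v" shows "Inv N (fire c v)"
proof -
  obtain a b where ab: "a \<le> 0" "0 \<le> b" "\<forall>w. c w \<noteq> 0 \<longrightarrow> a \<le> w \<and> w \<le> b"
    "\<forall>w. a < w \<and> w < b \<longrightarrow> 1 \<le> c w" "(\<Sum>w\<in>{a..b}. int (c w)) = N"
    using assms(1) unfolding Inv_def by blast
  have va: "a \<le> v \<and> v \<le> b" using ab(3) assms(2) by force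
  define a' where "a' = min a (v-1)"
  define b' where "b' = max b (v+1)"
  have "(\<Sum>w\<in>{a'..b'}. 1 * int (fire c v w)) = (\<Sum>w\<in>{a'..b'}. 1 * int (c w)) + 1 + 1 - 2 * 1"
    by (rule sum_fire) (use assms(2) in \<open>auto simp: a'_def b'_def\<close>)
  also have "(\<Sum>w\<in>{a'..b'}. 1 * int (c w)) = (\<Sum>w\<in>{a..b}. int (c w))"
    using ab(3) by (auto intro!: sum.mono_neutral_right simp: a'_def b'_def)
  finally have s: "(\<Sum>w\<in>{a'..b'}. int (fire c v w)) = N" using ab(5) by simp
  have supp: "\<forall>w. fire c v w \<noteq> 0 \<longrightarrow> a' \<le> w \<and> w \<le> b'"
  proof (intro allI impI)
    fix w assume "fire c v w \<noteq> 0"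
    then have "w = v \<or> w = v - 1 \<or> w = v + 1 \<or> c w \<noteq> 0" by (auto simp: fire_def split: if_splits)
    moreover have "c w \<noteq> 0 \<longrightarrow> a \<le> w \<and> w \<le> b" using ab(3) by blast
    ultimately show "a' \<le> w \<and> w \<le> b'" using va unfolding a'_def b'_def by auto
  qed
  have pos: "\<forall>w. a' < w \<and> w < b' \<longrightarrow> 1 \<le> fire c v w"
  proof (intro allI impI)
    fix w assume w: "a' < w \<and> w < b'"
    show "1 \<le> fire c v w"
    proof (cases "w = v \<or> w = v - 1 \<or> w = v + 1")
      case True then show ?thesis using assms(2) by (auto simp: fire_def)
    next
      case False
      then have "a < w \<and> w < b" using w va by (auto simp: a'_def b'_def)
      then show ?thesis using ab(4) False by (auto simp: fire_def)
    qed
  qed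
  show ?thesis unfolding Inv_def
    by (rule exI[of _ a'], rule exI[of _ b']) (use ab s supp pos in \<open>auto simp: a'_def b'_def\<close>)
qed

definition P :: "int \<Rightarrow> config \<Rightarrow> int" where
  "P N c = (\<Sum>w\<in>{-(N+2)..N+2}. w^2 * int (c w))"

lemma Inv_N: "Inv N c \<Longrightarrow> 0 \<le> N"
  unfolding Inv_def by (auto intro: sum_nonneg)

lemma Inv_sumS:
  assumes "Inv N c" shows "(\<Sum>w\<in>{-(N+2)..N+2}. int (c w)) = N"
proof -
  obtain a b where ab: "a \<le> 0" "0 \<le> b" "\<forall>w. c w \<noteq> 0 \<longrightarrow> a \<le> w \<and> w \<le> b"
    "\<forall>w. a < w \<and> w < b \<longrightarrow> 1 \<le> c w" "(\<Sum>w\<in>{a..b}. int (c w)) = N"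
    using assms(1) unfolding Inv_def by blast
  have "(\<Sum>w\<in>{-(N+2)..N+2}. int (c w)) = (\<Sum>w\<in>{-(N+2)..N+2} \<inter> {a..b}. int (c w))"
    using ab(3) by (intro sum.mono_neutral_right) auto
  also have "\<dots> = (\<Sum>w\<in>{a..b}. int (c w))"
  proof (intro sum.mono_neutral_left)
    show "\<forall>i\<in>{a..b} - {-(N+2)..N+2} \<inter> {a..b}. int (c i) = 0"
    proof
      fix i assume "i \<in> {a..b} - {-(N+2)..N+2} \<inter> {a..b}"
      then show "int (c i) = 0" using Inv_bound[OF assms, of i] by (cases "c i = 0") auto
    qed
  qed auto
  finally show ?thesis using ab(5) by simp
qed

lemma P_fire:
  assumes "Inv N c" "3 \<le> c v" shows "P N (fire c v) = P N c + 2"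
proof -
  have "-(N+1) \<le> v \<and> v \<le> N+1" using Inv_bound[OF assms(1)] assms(2) by force
  then have "(\<Sum>w\<in>{-(N+2)..N+2}. w^2 * int (fire c v w)) =
     (\<Sum>w\<in>{-(N+2)..N+2}. w^2 * int (c w)) + (v-1)^2 + (v+1)^2 - 2 * v^2"
    by (intro sum_fire) (use assms(2) in auto)
  then show ?thesis unfolding P_def by (simp add: power2_eq_square algebra_simps)
qed

lemma P_bound:
  assumes "Inv N c" shows "P N c \<le> (N+2)^2 * N"
proof -
  have N: "0 \<le> N" using Inv_N[OF assms] .
  have "P N c \<le> (\<Sum>w\<in>{-(N+2)..N+2}. (N+2)^2 * int (c w))"
    unfolding P_def
  proof (rule sum_mono)
    fix w assume "w \<in> {-(N+2)..N+2}"
    then have "\<bar>w\<bar> \<le> \<bar>N+2\<bar>" using N by auto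
    then have "w^2 \<le> (N+2)^2" using abs_le_square_iff by blast
    then show "w^2 * int (c w) \<le> (N+2)^2 * int (c w)" by (intro mult_right_mono) auto
  qed
  also have "\<dots> = (N+2)^2 * N" using Inv_sumS[OF assms] by (simp add: sum_distrib_left[symmetric])
  finally show ?thesis .
qed

definition mu :: "int \<Rightarrow> config \<Rightarrow> nat" where
  "mu N c = nat ((N+2)^2 * N - P N c)"

lemma mu_fire: "Inv N c \<Longrightarrow> 3 \<le> c v \<Longrightarrow> mu N (fire c v) < mu N c"
  using P_fire[of N c v] P_bound[of N "fire c v"] Inv_fire[of N c v]
  unfolding mu_def by linarith

lemma step_Inv: "chip_step c d \<Longrightarrow> Inv N c \<Longrightarrow> Inv N d \<and> mu N d < mu N c"
  unfolding chip_step_def can_fire_def using Inv_fire mu_fire by blast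

lemma reach_Inv: "chip_step\<^sup>*\<^sup>* c d \<Longrightarrow> Inv N c \<Longrightarrow> Inv N d"
  by (induction rule: rtranclp_induct) (auto dest: step_Inv)

lemma stable_nostep: "stable c \<Longrightarrow> \<not> chip_step c d"
  unfolding stable_def chip_step_def can_fire_def by (metis not_less_eq_eq numeral_3_eq_3 numeral_2_eq_2)

lemma stable_reach: "stable c \<Longrightarrow> chip_step\<^sup>*\<^sup>* c e \<Longrightarrow> e = c"
  by (metis converse_rtranclpE stable_nostep)

lemma exists_nf: "Inv N c \<Longrightarrow> \<exists>e. chip_step\<^sup>*\<^sup>* c e \<and> stable e"
proof (induction "mu N c" arbitrary: c rule: less_induct)
  case less
  show ?case
  proof (cases "stable c")
    case True then show ?thesis by blast
  next
    case False
    then obtain v where "3 \<le> c v" unfolding stable_def by (metis not_less_eq_eq numeral_3_eq_3 numeral_2_eq_2)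
    then have st: "chip_step c (fire c v)" unfolding chip_step_def can_fire_def by blast
    from step_Inv[OF st less.prems] less.hyps obtain e where
      "chip_step\<^sup>*\<^sup>* (fire c v) e" "stable e" by blast
    then show ?thesis using st by (meson converse_rtranclp_into_rtranclp)
  qed
qed

lemma diamond:
  assumes "3 \<le> c u" "3 \<le> c v" "u \<noteq> v"
  shows "3 \<le> fire c u v" "fire (fire c u) v = fire (fire c v) u"
  using assms by (auto simp: fire_def fun_eq_iff)

lemma unique_nf: "Inv N c \<Longrightarrow> chip_step\<^sup>*\<^sup>* c e1 \<Longrightarrow> stable e1 \<Longrightarrow> chip_step\<^sup>*\<^sup>* c e2 \<Longrightarrow> stable e2 \<Longrightarrow> e1 = e2"
proof (induction "mu N c" arbitrary: c e1 e2 rule: less_induct)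
  case less
  show ?case
  proof (cases "stable c")
    case True then show ?thesis using less.prems stable_reach by metis
  next
    case False
    have ne1: "c \<noteq> e1" using False less.prems by blast
    have ne2: "c \<noteq> e2" using False less.prems by blast
    obtain c1 where c1: "chip_step c c1" "chip_step\<^sup>*\<^sup>* c1 e1"
      using less.prems(2) ne1 by (metis converse_rtranclpE)
    obtain c2 where c2: "chip_step c c2" "chip_step\<^sup>*\<^sup>* c2 e2"
      using less.prems(4) ne2 by (metis converse_rtranclpE)
    obtain u where u: "3 \<le> c u" "c1 = fire c u" using c1(1) unfolding chip_step_def can_fire_def by blast
    obtain v where v: "3 \<le> c v" "c2 = fire c v" using c2(1) unfolding chip_step_def can_fire_def by blast
    have I1: "Inv N c1" "mu N c1 < mu N c" using step_Inv[OF c1(1) less.prems(1)] by auto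
    have I2: "Inv N c2" "mu N c2 < mu N c" using step_Inv[OF c2(1) less.prems(1)] by auto
    show ?thesis
    proof (cases "u = v")
      case True
      then show ?thesis using less.hyps[OF I1(2) I1(1) c1(2) less.prems(3)] c2(2) less.prems(5) u v by auto
    next
      case False
      define D where "D = fire c1 v"
      have s1: "chip_step c1 D" using diamond(1)[OF u(1) v(1) False] u v
        unfolding D_def chip_step_def can_fire_def by blast
      have "D = fire c2 u" using diamond(2)[OF u(1) v(1) False] u v D_def by simp
      moreover have "3 \<le> c2 u" using diamond(1)[OF v(1) u(1)] False u v by auto
      ultimately have s2: "chip_step c2 D" unfolding chip_step_def can_fire_def by blast
      have ID: "Inv N D" using step_Inv[OF s1 I1(1)] by auto
      obtain e where e: "chip_step\<^sup>*\<^sup>* D e" "stable e" using exists_nf[OF ID] by blast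
      have "e1 = e" using less.hyps[OF I1(2) I1(1) c1(2) less.prems(3)] e s1
        by (meson converse_rtranclp_into_rtranclp)
      moreover have "e2 = e" using less.hyps[OF I2(2) I2(1) c2(2) less.prems(5)] e s2
        by (meson converse_rtranclp_into_rtranclp)
      ultimately show ?thesis by simp
    qed
  qed
qed


lemma step_fire: "3 \<le> c v \<Longrightarrow> chip_step c (fire c v)"
  unfolding chip_step_def can_fire_def by blast

lemma mono_reach: "chip_step\<^sup>*\<^sup>* c c' \<Longrightarrow> chip_step\<^sup>*\<^sup>* (\<lambda>w. c w + k w) (\<lambda>w. c' w + k w)"
proof (induction rule: rtranclp_induct)
  case base then show ?case by simp
next
  case (step y z)
  obtain v where v: "3 \<le> y v" "z = fire y v" using step(2) unfolding chip_step_def can_fire_def by blast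
  have "fire (\<lambda>w. y w + k w) v = (\<lambda>w. z w + k w)" using v by (auto simp: fire_def fun_eq_iff)
  moreover have "3 \<le> y v + k v" using v by simp
  ultimately have "chip_step (\<lambda>w. y w + k w) (\<lambda>w. z w + k w)" using step_fire by metis
  then show ?case using step(3) by simp
qed

definition wv :: "int \<Rightarrow> int \<Rightarrow> int \<Rightarrow> config \<Rightarrow> config" where
  "wv p q x c = (\<lambda>w. if p \<le> w \<and> w \<le> q then (if w = p+q-x then 1 else 2)
      else if w = p-1 \<or> w = q+1 then c w + 1 else c w)"

lemma wave: "p \<le> x \<Longrightarrow> x \<le> q \<Longrightarrow> (\<forall>w. p \<le> w \<and> w \<le> q \<longrightarrow> c w = (if w = x then 3 else 2))
  \<Longrightarrow> chip_step\<^sup>*\<^sup>* c (wv p q x c)"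
proof (induction "nat (q-p)" arbitrary: p q x c rule: less_induct)
  case less
  define c1 where "c1 = fire c x"
  have s1: "chip_step c c1" unfolding c1_def using less.prems by (intro step_fire) auto
  show ?case
  proof (cases "x = q")
    case xq: True
    show ?thesis
    proof (cases "p = q")
      case True
      have "c1 = wv p q x c" using less.prems xq True by (auto simp: c1_def fire_def wv_def fun_eq_iff)
      then show ?thesis using s1 by simp
    next
      case False
      have r: "chip_step\<^sup>*\<^sup>* c1 (wv p (q-1) (q-1) c1)"
        using less.prems xq False by (intro less.hyps) (auto simp: c1_def fire_def)
      have "wv p (q-1) (q-1) c1 = wv p q x c" using less.prems xq False
        by (auto simp: c1_def fire_def wv_def fun_eq_iff)
      then show ?thesis using s1 r by simp
    qed
  next
    case xq: False
    have r: "chip_step\<^sup>*\<^sup>* c1 (wv (x+1) q (x+1) c1)"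
      using less.prems xq by (intro less.hyps) (auto simp: c1_def fire_def)
    define T1 where "T1 = wv (x+1) q (x+1) c1"
    show ?thesis
    proof (cases "x = p")
      case True
      have "T1 = wv p q x c" using less.prems xq True
        by (auto simp: T1_def c1_def fire_def wv_def fun_eq_iff)
      then show ?thesis using s1 r T1_def by simp
    next
      case False
      have r2: "chip_step\<^sup>*\<^sup>* T1 (wv p (q-1) (x-1) T1)"
        using less.prems xq False by (intro less.hyps) (auto simp: T1_def wv_def c1_def fire_def)
      have "wv p (q-1) (x-1) T1 = wv p q x c" using less.prems xq False
        by (auto simp: T1_def c1_def fire_def wv_def fun_eq_iff)
      then show ?thesis using s1 r r2 T1_def
        by (metis converse_rtranclp_into_rtranclp rtranclp_trans)
    qed
  qed
qed

definition c0 :: "int \<Rightarrow> config" where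
  "c0 m = (\<lambda>v. if v = 0 then nat (4 * m - 1) else 0)"

definition dm :: "int \<Rightarrow> config" where
  "dm m = (\<lambda>v. if v = -m \<or> v = 0 \<or> v = m then 1
                else if (-m < v \<and> v < 0) \<or> (0 < v \<and> v < m) then 2
                else 0)"

lemma reach: "1 \<le> m \<Longrightarrow> chip_step\<^sup>*\<^sup>* (c0 m) (dm m)"
proof (induction m rule: int_ge_induct)
  case base
  have "fire (c0 1) 0 = dm 1" by (auto simp: c0_def dm_def fire_def fun_eq_iff)
  moreover have "3 \<le> c0 1 0" by (simp add: c0_def)
  ultimately show ?case using step_fire by (metis r_into_rtranclp)
next
  case (step m)
  define k2 :: config where "k2 = (\<lambda>w. if w = 0 then 2 else 0)"
  have e1: "c0 (m+1) = (\<lambda>w. c0 m w + (k2 w + k2 w))" using step(1)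
    by (auto simp: c0_def k2_def fun_eq_iff)
  have r1: "chip_step\<^sup>*\<^sup>* (c0 (m+1)) (\<lambda>w. dm m w + (k2 w + k2 w))"
    unfolding e1 by (rule mono_reach[OF step(2)])
  define A where "A = (\<lambda>w. dm m w + k2 w)"
  have eA: "(\<lambda>w. dm m w + (k2 w + k2 w)) = (\<lambda>w. A w + k2 w)" by (simp add: A_def fun_eq_iff)
  have rA: "chip_step\<^sup>*\<^sup>* A (wv (-m+1) (m-1) 0 A)"
    using step(1) by (intro wave) (auto simp: A_def dm_def k2_def)
  define B where "B = (\<lambda>w. wv (-m+1) (m-1) 0 A w + k2 w)"
  have rB: "chip_step\<^sup>*\<^sup>* (\<lambda>w. A w + k2 w) B" unfolding B_def by (rule mono_reach[OF rA])
  have rC: "chip_step\<^sup>*\<^sup>* B (wv (-m) m 0 B)"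
    using step(1) by (intro wave) (auto simp: B_def A_def wv_def dm_def k2_def)
  have "wv (-m) m 0 B = dm (m+1)" using step(1)
    by (auto simp: B_def A_def wv_def dm_def k2_def fun_eq_iff)
  then show ?case using r1 eA rB rC by (metis rtranclp_trans)
qed

theorem lemma3p8:
  fixes m :: int
  assumes "m \<ge> 1"
  shows "terminates_with (\<lambda>v. if v = 0 then nat (4 * m - 1) else 0)
           (\<lambda>v. if v = -m \<or> v = 0 \<or> v = m then 1
                else if (-m < v \<and> v < 0) \<or> (0 < v \<and> v < m) then 2
                else 0)"
proof -
  define N where "N = 4 * m - 1"
  have I0: "Inv N (c0 m)" unfolding Inv_def
    by (rule exI[of _ 0], rule exI[of _ 0]) (use assms in \<open>auto simp: c0_def N_def\<close>)
  have R: "chip_step\<^sup>*\<^sup>* (c0 m) (dm m)" using reach assms by blast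
  have S: "stable (dm m)" by (simp add: stable_def dm_def)
  have NT: "\<not> (\<exists>f. f 0 = c0 m \<and> (\<forall>n. chip_step (f n) (f (Suc n))))"
  proof
    assume "\<exists>f. f 0 = c0 m \<and> (\<forall>n. chip_step (f n) (f (Suc n)))"
    then obtain f where f: "f 0 = c0 m" "\<forall>n. chip_step (f n) (f (Suc n))" by blast
    have "Inv N (f n) \<and> mu N (f n) + n \<le> mu N (f 0)" for n
    proof (induction n)
      case 0 then show ?case using f I0 by simp
    next
      case (Suc n) then show ?case using step_Inv[OF f(2)[rule_format, of n]] by fastforce
    qed
    from this[of "Suc (mu N (f 0))"] show False by simp
  qed
  have U: "\<forall>e. chip_step\<^sup>*\<^sup>* (c0 m) e \<and> stable e \<longrightarrow> e = dm m"
    using unique_nf[OF I0] R S by blast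
  show ?thesis using NT R S U unfolding terminates_with_def c0_def dm_def by blast
qed

end
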